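(* Let $f:\mathbb{R}^n\to\overline{\mathbb{R}}$ be a proper closed convex function with conjugate $f^*$, and let $K=\{(x,r)\in\mathbb{R}^n\times\mathbb{R} : x=0,\ r\ge 0\}$. The mapping $\Psi:2^{\mathbb{R}^{n+1}}\to 2^{\mathbb{R}^{n+1}}$ defined by $$\Psi(F^* ):=\bigcap_{(u,f^*(u))\in F^*}\{(x,f(x))\in\mathbb{R}^n\times\mathbb{R} : u\in\partial f(x)\}$$ is an inclusion reversing one-to-one mapping between the set of $K$-minimal exposed faces of $\operatorname{epi} f^*$ and the set of $K$-minimal exposed faces of $\operatorname{epi} f$. Its inverse mapping is given by $$\Psi^*(F):=\bigcap_{(x,f(x))\in F}\{(u,f^*(u))\in\mathbb{R}^n\times\mathbb{R} : u\in\partial f(x)\}.$$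
   Context: $\overline{\mathbb{R}}=\mathbb{R}\cup\{\pm\infty\}$; $f^*(u)=\sup_x(\langle x,u\rangle-f(x))$. An exposed face of a convex set $A$ is a set $A\cap H$ with $H$ a supporting hyperplane to $A$ (i.e. $A\cap H\neq\emptyset$ and $A$ lies in one closed half-space bounded by $H$). A point $p\in A$ is minimal with respect to $K$ if $(\{p\}-K\setminus(-K))\cap A=\emptyset$; a face is $K$-minimal if all its points are minimal with respect to $K$. *)

theory Defs
  imports "HOL-Analysis.Analysis" "HOL-Library.Extended_Real"
begin

text \<open>Functions R^n -> extended reals; R^n is an arbitrary Euclidean space 'a,
  and R^(n+1) = R^n x R is the product type 'a \<times> real.\<close>

definition epi :: "('a \<Rightarrow> ereal) \<Rightarrow> ('a \<times> real) set" where
  "epi f = {(x, r). f x \<le> ereal r}"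

definition proper_fun :: "('a \<Rightarrow> ereal) \<Rightarrow> bool" where
  "proper_fun f \<longleftrightarrow> (\<forall>x. f x \<noteq> -\<infinity>) \<and> (\<exists>x. f x < \<infinity>)"

definition closed_fun :: "('a::topological_space \<Rightarrow> ereal) \<Rightarrow> bool" where
  "closed_fun f \<longleftrightarrow> closed (epi f)"

definition convex_fun :: "('a::real_vector \<Rightarrow> ereal) \<Rightarrow> bool" where
  "convex_fun f \<longleftrightarrow> convex (epi f)"

definition fconj :: "('a::real_inner \<Rightarrow> ereal) \<Rightarrow> 'a \<Rightarrow> ereal" where
  "fconj f u = (SUP x. ereal (inner x u) - f x)"

definition subdiff :: "('a::real_inner \<Rightarrow> ereal) \<Rightarrow> 'a \<Rightarrow> 'a set" where
  "subdiff f x = {u. \<bar>f x\<bar> \<noteq> \<infinity> \<and> (\<forall>y. f x + ereal (inner (y - x) u) \<le> f y)}"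

definition exposed_face :: "'b::real_inner set \<Rightarrow> 'b set \<Rightarrow> bool" where
  "exposed_face A F \<longleftrightarrow> (\<exists>a b. a \<noteq> 0 \<and> F = A \<inter> {p. inner p a = b} \<and>
      A \<inter> {p. inner p a = b} \<noteq> {} \<and> A \<subseteq> {p. inner p a \<le> b})"

definition minimal_wrt :: "'b::ab_group_add set \<Rightarrow> 'b set \<Rightarrow> 'b \<Rightarrow> bool" where
  "minimal_wrt K A p \<longleftrightarrow> p \<in> A \<and> ({p - k | k. k \<in> K - uminus ` K} \<inter> A = {})"

definition minimal_face :: "'b::ab_group_add set \<Rightarrow> 'b set \<Rightarrow> 'b set \<Rightarrow> bool" where
  "minimal_face K A F \<longleftrightarrow> (\<forall>p\<in>F. minimal_wrt K A p)"

definition Kvert :: "('a::zero \<times> real) set" where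
  "Kvert = {(x, r). x = 0 \<and> r \<ge> 0}"

definition Psi :: "('a::real_inner \<Rightarrow> ereal) \<Rightarrow> ('a \<times> real) set \<Rightarrow> ('a \<times> real) set" where
  "Psi f Fs = (\<Inter>u \<in> {u. \<exists>r. (u, r) \<in> Fs \<and> fconj f u = ereal r}.
      {(x, r). f x = ereal r \<and> u \<in> subdiff f x})"

definition Psi_star :: "('a::real_inner \<Rightarrow> ereal) \<Rightarrow> ('a \<times> real) set \<Rightarrow> ('a \<times> real) set" where
  "Psi_star f F = (\<Inter>x \<in> {x. \<exists>r. (x, r) \<in> F \<and> f x = ereal r}.
      {(u, r). fconj f u = ereal r \<and> u \<in> subdiff f x})"

end

theory Submission
  imports Defs
begin


lemma subdiff_fin: "u \<in> subdiff g x \<Longrightarrow> \<exists>a. g x = ereal a"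
  unfolding subdiff_def by (cases "g x") auto

lemma subdiff_iff:
  "u \<in> subdiff g x \<longleftrightarrow> (\<exists>a. g x = ereal a \<and> (\<forall>y. ereal (a + inner (y - x) u) \<le> g y))"
  unfolding subdiff_def by (cases "g x") auto

lemma subdiff_convex: "convex (subdiff g x)"
proof (rule convexI)
  fix u1 u2 and t1 t2 :: real
  assume u1: "u1 \<in> subdiff g x" and u2: "u2 \<in> subdiff g x" and t: "0 \<le> t1" "0 \<le> t2" "t1 + t2 = 1"
  from u1 obtain a where a: "g x = ereal a" and h1: "\<forall>y. ereal (a + inner (y - x) u1) \<le> g y"
    by (auto simp: subdiff_iff)
  from u2 a have h2: "\<forall>y. ereal (a + inner (y - x) u2) \<le> g y" by (auto simp: subdiff_iff)
  show "t1 *\<^sub>R u1 + t2 *\<^sub>R u2 \<in> subdiff g x"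
    unfolding subdiff_iff
  proof (intro exI conjI allI)
    show "g x = ereal a" by fact
    fix y
    show "ereal (a + inner (y - x) (t1 *\<^sub>R u1 + t2 *\<^sub>R u2)) \<le> g y"
    proof (cases "g y")
      case (real r)
      with h1 h2 have "a + inner (y - x) u1 \<le> r" "a + inner (y - x) u2 \<le> r" by (metis ereal_less_eq(3))+
      then have "t1 * (a + inner (y - x) u1) + t2 * (a + inner (y - x) u2) \<le> t1 * r + t2 * r"
        using t by (simp add: add_mono mult_left_mono)
      moreover have "t1 * r + t2 * r = r" using t(3) by (metis distrib_right mult_1)
      moreover have "t1 * (a + inner (y - x) u1) + t2 * (a + inner (y - x) u2)
          = (t1 + t2) * a + t1 * inner (y - x) u1 + t2 * inner (y - x) u2" by (simp add: algebra_simps)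
      moreover have "a + inner (y - x) (t1 *\<^sub>R u1 + t2 *\<^sub>R u2) = (t1 + t2) * a + t1 * inner (y - x) u1 + t2 * inner (y - x) u2"
        using t(3) by (simp add: inner_add_right)
      ultimately have "a + inner (y - x) (t1 *\<^sub>R u1 + t2 *\<^sub>R u2) \<le> r" by linarith
      then show ?thesis using real by simp
    next
      case PInf then show ?thesis by simp
    next
      case MInf then show ?thesis using h1 by (metis MInfty_neq_ereal(2) ereal_infty_less_eq(2))
    qed
  qed
qed

lemma subdiff_ri:
  fixes g :: "'a::euclidean_space \<Rightarrow> ereal"
  assumes ri: "u \<in> rel_interior (subdiff g x0)" and ux: "u \<in> subdiff g x"
  shows "subdiff g x0 \<subseteq> subdiff g x"
proof
  fix u' assume u': "u' \<in> subdiff g x0"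
  have uS: "u \<in> subdiff g x0" using ri rel_interior_subset by blast
  then obtain a where a: "g x0 = ereal a" and ha: "\<forall>y. ereal (a + inner (y - x0) u) \<le> g y"
    by (auto simp: subdiff_iff)
  from ux obtain c where c: "g x = ereal c" and hc: "\<forall>y. ereal (c + inner (y - x) u) \<le> g y"
    by (auto simp: subdiff_iff)
  have S: "\<And>w. w \<in> subdiff g x0 \<Longrightarrow> a + inner (x - x0) w \<le> c"
  proof -
    fix w assume "w \<in> subdiff g x0"
    then have "\<forall>y. ereal (a + inner (y - x0) w) \<le> g y" using a by (auto simp: subdiff_iff)
    then have "ereal (a + inner (x - x0) w) \<le> ereal c" using c by metis
    then show "a + inner (x - x0) w \<le> c" by simp
  qed
  have e1: "c - a = inner (x - x0) u"
  proof -
    have "a + inner (x - x0) u \<le> c" using S uS .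
    moreover have "c + inner (x0 - x) u \<le> a" using hc[rule_format, of x0] a by simp
    moreover have "inner (x0 - x) u = - inner (x - x0) u" by (simp add: inner_diff_left)
    ultimately show ?thesis by linarith
  qed
  have d1: "inner (x - x0) u' \<le> inner (x - x0) u" using S[OF u'] e1 by linarith
  have d2: "inner (x - x0) u \<le> inner (x - x0) u'"
  proof (cases "u' = u")
    case True then show ?thesis by simp
  next
    case False
    from ri obtain e where e: "e > 0" "ball u e \<inter> affine hull (subdiff g x0) \<subseteq> subdiff g x0"
      by (auto simp: mem_rel_interior_ball)
    define eps where "eps = e / (2 * norm (u - u'))"
    have np: "norm (u - u') > 0" using False by simp
    have epsp: "eps > 0" using e np by (simp add: eps_def)
    define w where "w = (1 + eps) *\<^sub>R u + (- eps) *\<^sub>R u'"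
    have "w \<in> affine hull (subdiff g x0)"
      unfolding w_def by (rule mem_affine) (auto intro: hull_inc u' uS affine_affine_hull)
    moreover have "dist u w < e"
    proof -
      have "u - w = eps *\<^sub>R (u' - u)" by (simp add: w_def algebra_simps)
      then have "dist u w = eps * norm (u - u')" using epsp by (simp add: dist_norm norm_minus_commute)
      also have "\<dots> = e / 2" using np by (simp add: eps_def)
      finally show ?thesis using e by simp
    qed
    ultimately have "w \<in> subdiff g x0" using e by auto
    then have "a + inner (x - x0) w \<le> c" by (rule S)
    then have "inner (x - x0) w \<le> inner (x - x0) u" using e1 by linarith
    moreover have "inner (x - x0) w = inner (x - x0) u + eps * (inner (x - x0) u - inner (x - x0) u')"
      by (simp add: w_def inner_add_right algebra_simps)
    ultimately have "eps * (inner (x - x0) u - inner (x - x0) u') \<le> 0" by linarith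
    with epsp show ?thesis by (simp add: mult_le_0_iff)
  qed
  have e2: "c - a = inner (x - x0) u'" using d1 d2 e1 by linarith
  have hu': "\<forall>y. ereal (a + inner (y - x0) u') \<le> g y" using u' a by (auto simp: subdiff_iff)
  show "u' \<in> subdiff g x"
    unfolding subdiff_iff
  proof (intro exI conjI allI)
    show "g x = ereal c" by fact
    fix y
    have "c + inner (y - x) u' = a + inner (y - x0) u'"
      using e2 by (simp add: inner_diff_left)
    then show "ereal (c + inner (y - x) u') \<le> g y" using hu' by simp
  qed
qed


lemma conj_ge: "ereal (inner y u) - f y \<le> fconj f u"
  unfolding fconj_def by (rule SUP_upper) simp

lemma conj_le: "(\<And>y. ereal (inner y u) - f y \<le> M) \<Longrightarrow> fconj f u \<le> M"
  unfolding fconj_def by (rule SUP_least)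

lemma subdiff_conj_val:
  assumes "u \<in> subdiff f x" "f x = ereal a"
  shows "fconj f u = ereal (inner x u - a)"
proof (rule antisym)
  have h: "\<forall>y. ereal (a + inner (y - x) u) \<le> f y" using assms by (auto simp: subdiff_iff)
  show "fconj f u \<le> ereal (inner x u - a)"
  proof (rule conj_le)
    fix y show "ereal (inner y u) - f y \<le> ereal (inner x u - a)"
    proof (cases "f y")
      case (real r)
      with h have "a + inner (y - x) u \<le> r" by (metis ereal_less_eq(3))
      then show ?thesis using real by (simp add: inner_diff_left)
    next
      case PInf then show ?thesis by simp
    next
      case MInf then show ?thesis using h by (metis MInfty_neq_ereal(2) ereal_infty_less_eq(2))
    qed
  qed
  show "ereal (inner x u - a) \<le> fconj f u" using conj_ge[of x u f] assms(2) by simp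
qed

lemma subdiff_to_conj:
  assumes "u \<in> subdiff f x" shows "x \<in> subdiff (fconj f) u"
proof -
  obtain a where a: "f x = ereal a" using assms subdiff_fin by blast
  have c: "fconj f u = ereal (inner x u - a)" using subdiff_conj_val[OF assms a] .
  show ?thesis unfolding subdiff_iff
  proof (intro exI conjI allI)
    show "fconj f u = ereal (inner x u - a)" by fact
    fix v
    have eq: "inner x u - a + inner (v - u) x = inner x v - a"
      by (simp add: inner_diff_left inner_commute[of x u] inner_commute[of x v])
    show "ereal (inner x u - a + inner (v - u) x) \<le> fconj f v"
      unfolding eq using conj_ge[of x v f] a by simp
  qed
qed

lemma conj_to_subdiff:
  fixes f :: "'a::euclidean_space \<Rightarrow> ereal"
  assumes cl: "closed (epi f)" and cv: "convex (epi f)"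
    and xs: "x \<in> subdiff (fconj f) u"
  shows "u \<in> subdiff f x"
proof -
  obtain c where c: "fconj f u = ereal c" and hc: "\<forall>v. ereal (c + inner (v - u) x) \<le> fconj f v"
    using xs by (auto simp: subdiff_iff)
  have minor: "ereal (inner y u - c) \<le> f y" for y
  proof -
    have "ereal (inner y u) - f y \<le> ereal c" using conj_ge[of y u f] c by simp
    then show ?thesis by (cases "f y") auto
  qed
  define \<beta> where "\<beta> = inner x u - c"
  have fx: "f x = ereal \<beta>"
  proof (rule ccontr)
    assume ne: "f x \<noteq> ereal \<beta>"
    have "ereal \<beta> \<le> f x" using minor[of x] by (simp add: \<beta>_def)
    with ne have nle: "\<not> f x \<le> ereal \<beta>" by simp
    then have "(x, \<beta>) \<notin> epi f" by (simp add: epi_def)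
    from separating_hyperplane_closed_point[OF cv cl this]
    obtain a b where ab: "inner a (x, \<beta>) < b" "\<forall>p\<in>epi f. inner a p > b" by blast
    obtain v t where a: "a = (v, t)" by (cases a)
    define l where "l = 1 / (1 + \<bar>t\<bar>)"
    have lp: "l > 0" by (simp add: l_def add_pos_nonneg)
    have ltabs: "l * \<bar>t\<bar> < 1" unfolding l_def by (simp add: field_simps)
    define d where "d = 1 + l * t"
    have "-(l*\<bar>t\<bar>) \<le> l*t" using lp abs_ge_minus_self[of t] mult_left_mono[of "-\<bar>t\<bar>" t l] by simp
    then have dp: "d > 0" unfolding d_def using ltabs by linarith
    define w where "w = (1 / d) *\<^sub>R (u - l *\<^sub>R v)"
    define c' where "c' = (c - l * b) / d"
    have inw: "inner y w = (inner y u - l * inner y v) / d" for y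
      by (simp add: w_def inner_diff_right)
    have minor2: "ereal (inner y w - c') \<le> f y" for y
    proof (cases "f y")
      case (real r)
      then have "(y, r) \<in> epi f" by (simp add: epi_def)
      then have "inner (v, t) (y, r) > b" using ab(2) a by blast
      then have "inner v y + t * r > b" by simp
      then have h1: "l * (inner v y + t * r) > l * b" using lp by simp
      have h2: "inner y u - c \<le> r" using minor[of y] real by simp
      have "l * (inner v y + t * r) = l * inner y v + l * t * r" by (simp add: distrib_left inner_commute)
      moreover have "d * r = r + l * t * r" by (simp add: d_def distrib_right)
      ultimately have "inner y u - l * inner y v - c + l * b \<le> d * r"
        using h1 h2 by linarith
      then have "(inner y u - l * inner y v - c + l * b) / d \<le> r"
        using dp by (simp add: pos_divide_le_eq mult.commute)
      moreover have "inner y w - c' = (inner y u - l * inner y v - c + l * b) / d"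
        unfolding inw c'_def by (simp add: diff_divide_distrib add_divide_distrib)
      ultimately show ?thesis using real by simp
    next
      case PInf then show ?thesis by simp
    next
      case MInf then show ?thesis using minor[of y] by simp
    qed
    have "fconj f w \<le> ereal c'"
    proof (rule conj_le)
      fix y show "ereal (inner y w) - f y \<le> ereal c'"
        using minor2[of y] by (cases "f y") auto
    qed
    with hc[rule_format, of w] have "ereal (c + inner (w - u) x) \<le> ereal c'" by (rule order_trans)
    then have "c + inner (w - u) x \<le> c'" by simp
    moreover have "inner (w - u) x = inner x w - inner x u" by (simp add: inner_diff_left inner_commute[of w x] inner_commute[of u x])
    ultimately have le: "inner x w - c' \<le> \<beta>" unfolding \<beta>_def by linarith
    have "inner (v, t) (x, \<beta>) < b" using ab(1) a by blast
    then have "inner v x + t * \<beta> < b" by simp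
    then have "l * (inner v x + t * \<beta>) < l * b" using lp by simp
    moreover have "l * (inner v x + t * \<beta>) = l * inner x v + l * t * \<beta>" by (simp add: distrib_left inner_commute)
    moreover have "d * \<beta> = \<beta> + l * t * \<beta>" by (simp add: d_def distrib_right)
    ultimately have "d * \<beta> < inner x u - l * inner x v - c + l * b"
      unfolding \<beta>_def by linarith
    then have "\<beta> < (inner x u - l * inner x v - c + l * b) / d"
      using dp by (simp add: pos_less_divide_eq mult.commute)
    moreover have "inner x w - c' = (inner x u - l * inner x v - c + l * b) / d"
      unfolding inw c'_def by (simp add: diff_divide_distrib add_divide_distrib)
    ultimately show False using le by simp
  qed
  show ?thesis unfolding subdiff_iff
  proof (intro exI conjI allI)
    show "f x = ereal \<beta>" by fact
    fix y
    have "\<beta> + inner (y - x) u = inner y u - c" by (simp add: \<beta>_def inner_diff_left)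
    then show "ereal (\<beta> + inner (y - x) u) \<le> f y" using minor[of y] by simp
  qed
qed


definition GG :: "('a::real_inner \<Rightarrow> ereal) \<Rightarrow> 'a \<Rightarrow> ('a \<times> real) set" where
  "GG g u = {(x, r). g x = ereal r \<and> u \<in> subdiff g x}"

lemma Kdiff:
  fixes k :: "'a::ab_group_add \<times> real"
  shows "k \<in> Kvert - uminus ` Kvert \<longleftrightarrow> (\<exists>\<rho>>0. k = (0, \<rho>))"
proof
  assume k: "k \<in> Kvert - uminus ` Kvert"
  obtain z \<rho> where kz: "k = (z, \<rho>)" by (cases k)
  with k have z: "z = 0" "\<rho> \<ge> 0" by (auto simp: Kvert_def)
  have "\<rho> \<noteq> 0"
  proof
    assume "\<rho> = 0"
    then have "k = - (0, 0)" using kz z by simp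
    moreover have "(0, 0) \<in> (Kvert :: ('a \<times> real) set)" by (simp add: Kvert_def)
    ultimately show False using k by blast
  qed
  with z kz show "\<exists>\<rho>>0. k = (0, \<rho>)" by auto
next
  assume "\<exists>\<rho>>0. k = (0, \<rho>)"
  then obtain \<rho> where r: "\<rho> > 0" "k = (0, \<rho>)" by blast
  have "k \<in> Kvert" using r by (simp add: Kvert_def)
  moreover have "k \<notin> uminus ` Kvert"
  proof
    assume "k \<in> uminus ` Kvert"
    then obtain q where "q \<in> Kvert" "k = - q" by blast
    then show False using r by (cases q) (auto simp: Kvert_def)
  qed
  ultimately show "k \<in> Kvert - uminus ` Kvert" by blast
qed

lemma min_face_iff:
  "minimal_face Kvert A F \<longleftrightarrow> (\<forall>x s. (x, s) \<in> F \<longrightarrow> (x, s) \<in> A \<and> (\<forall>\<rho>>0. (x, s - \<rho>) \<notin> A))"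
  unfolding minimal_face_def minimal_wrt_def Kdiff by fastforce

lemma face_from_GG:
  fixes g :: "'a::real_inner \<Rightarrow> ereal"
  assumes ne: "GG g u \<noteq> {}"
  shows "exposed_face (epi g) (GG g u) \<and> minimal_face Kvert (epi g) (GG g u)"
proof
  obtain x0 r0 where x0: "(x0, r0) \<in> GG g u" using ne by auto
  then have gx0: "g x0 = ereal r0" and "u \<in> subdiff g x0" by (auto simp: GG_def)
  then have sub0: "\<forall>y. ereal (r0 + inner (y - x0) u) \<le> g y" by (auto simp: subdiff_iff)
  define b where "b = inner x0 u - r0"
  have ip: "inner p (u, -1::real) = inner (fst p) u - snd p" for p :: "'a \<times> real"
    by (cases p) simp
  have eq: "GG g u = epi g \<inter> {p. inner p (u, -1) = b}"
  proof (intro set_eqI iffI)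
    fix p assume p: "p \<in> GG g u"
    obtain y s where ps: "p = (y, s)" by (cases p)
    with p have gy: "g y = ereal s" and us: "u \<in> subdiff g y" by (auto simp: GG_def)
    then have "\<forall>z. ereal (s + inner (z - y) u) \<le> g z" by (auto simp: subdiff_iff)
    then have "ereal (s + inner (x0 - y) u) \<le> ereal r0" using gx0 by metis
    moreover have "ereal (r0 + inner (y - x0) u) \<le> ereal s" using sub0 gy by metis
    ultimately have "inner y u - s = b" unfolding b_def by (simp add: inner_diff_left)
    then show "p \<in> epi g \<inter> {p. inner p (u, -1) = b}" using ps gy by (simp add: epi_def ip)
  next
    fix p assume p: "p \<in> epi g \<inter> {p. inner p (u, -1) = b}"
    obtain y s where ps: "p = (y, s)" by (cases p)
    with p have le: "g y \<le> ereal s" and hb: "inner y u - s = b" by (auto simp: epi_def ip)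
    have key: "r0 + inner (z - x0) u = s + inner (z - y) u" for z
      using hb unfolding b_def by (simp add: inner_diff_left)
    have "ereal s \<le> g y" using sub0[rule_format, of y] key[of y] by simp
    with le have gy: "g y = ereal s" by simp
    have "u \<in> subdiff g y" unfolding subdiff_iff
    proof (intro exI conjI allI)
      show "g y = ereal s" by fact
      fix z show "ereal (s + inner (z - y) u) \<le> g z" using sub0 key[of z] by metis
    qed
    then show "p \<in> GG g u" using ps gy by (simp add: GG_def)
  qed
  have sub: "epi g \<subseteq> {p. inner p (u, -1) \<le> b}"
  proof
    fix p assume p: "p \<in> epi g"
    obtain y s where ps: "p = (y, s)" by (cases p)
    with p have le: "g y \<le> ereal s" by (simp add: epi_def)
    have "ereal (r0 + inner (y - x0) u) \<le> ereal s" using sub0 le by (metis order_trans)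
    then show "p \<in> {p. inner p (u, -1) \<le> b}" using ps unfolding b_def by (simp add: ip inner_diff_left)
  qed
  show "exposed_face (epi g) (GG g u)"
    unfolding exposed_face_def
    by (rule exI[of _ "(u, -1)"], rule exI[of _ b]) (use eq sub ne in \<open>auto simp: zero_prod_def\<close>)
  show "minimal_face Kvert (epi g) (GG g u)"
    unfolding min_face_iff
  proof (intro allI impI)
    fix x s assume xs: "(x, s) \<in> GG g u"
    then have gx: "g x = ereal s" by (simp add: GG_def)
    then show "(x, s) \<in> epi g \<and> (\<forall>\<rho>>0. (x, s - \<rho>) \<notin> epi g)" by (simp add: epi_def)
  qed
qed

lemma GG_from_face:
  fixes g :: "'a::real_inner \<Rightarrow> ereal"
  assumes ex: "exposed_face (epi g) F" and mf: "minimal_face Kvert (epi g) F"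
  shows "\<exists>u. F = GG g u \<and> F \<noteq> {}"
proof -
  obtain a b where a0: "a \<noteq> 0" and Feq: "F = epi g \<inter> {p. inner p a = b}"
    and Fne: "epi g \<inter> {p. inner p a = b} \<noteq> {}" and Fsub: "epi g \<subseteq> {p. inner p a \<le> b}"
    using ex unfolding exposed_face_def by blast
  obtain v t where a: "a = (v, t)" by (cases a)
  obtain x0 s0 where p0: "(x0, s0) \<in> F" using Fne Feq by auto
  have ep0: "g x0 \<le> ereal s0" and h0: "inner x0 v + s0 * t = b" using p0 Feq a by (auto simp: epi_def)
  have mfi: "\<And>x s \<rho>. (x, s) \<in> F \<Longrightarrow> \<rho> > 0 \<Longrightarrow> (x, s - \<rho>) \<notin> epi g"
    using mf unfolding min_face_iff by blast
  have tneg: "t < 0"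
  proof (rule ccontr)
    assume "\<not> t < 0"
    then consider "t > 0" | "t = 0" by linarith
    then show False
    proof cases
      case 1
      have "(x0, s0 + 1) \<in> epi g" using ep0 by (simp add: epi_def) (metis ereal_less_eq(3) le_add_same_cancel1 order_trans zero_le_one)
      then have "inner x0 v + (s0 + 1) * t \<le> b" using Fsub a by auto
      with h0 1 show False by (simp add: distrib_right)
    next
      case 2
      have "(x0, s0 + 1) \<in> epi g" using ep0 by (simp add: epi_def) (metis ereal_less_eq(3) le_add_same_cancel1 order_trans zero_le_one)
      then have "(x0, s0 + 1) \<in> F" using Feq a h0 2 by simp
      from mfi[OF this, of 1] have "(x0, s0) \<notin> epi g" by simp
      with ep0 show False by (simp add: epi_def)
    qed
  qed
  define u where "u = (- 1 / t) *\<^sub>R v"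
  define c where "c = b / (- t)"
  have vu: "v = (- t) *\<^sub>R u" using tneg by (simp add: u_def)
  have ip: "inner (y, s) a = (- t) * (inner y u - s)" for y s
    using a vu by (simp add: algebra_simps)
  have inF: "(y, s) \<in> F \<longleftrightarrow> g y \<le> ereal s \<and> inner y u - s = c" for y s
  proof -
    have "inner (y, s) a = b \<longleftrightarrow> inner y u - s = c"
      unfolding ip c_def using tneg by (auto simp: field_simps)
    then show ?thesis using Feq by (auto simp: epi_def)
  qed
  have inE: "g y \<le> ereal s \<Longrightarrow> inner y u - s \<le> c" for y s
  proof -
    assume "g y \<le> ereal s"
    then have "inner (y, s) a \<le> b" using Fsub by (auto simp: epi_def)
    then show "inner y u - s \<le> c" unfolding ip c_def using tneg by (auto simp: field_simps)
  qed
  have sub1: "F \<subseteq> GG g u"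
  proof
    fix p assume pF: "p \<in> F"
    obtain y s where ps: "p = (y, s)" by (cases p)
    with pF inF have le: "g y \<le> ereal s" and hc: "inner y u - s = c" by auto
    have gy: "g y = ereal s"
    proof (cases "g y")
      case (real r)
      with le have "r \<le> s" by simp
      moreover have "inner y u - r \<le> c" using inE[of y r] real by simp
      ultimately show ?thesis using hc real by simp
    next
      case PInf with le show ?thesis by simp
    next
      case MInf
      then have "inner y u - (s - 1) \<le> c" using inE[of y "s - 1"] by simp
      with hc show ?thesis by simp
    qed
    have "u \<in> subdiff g y" unfolding subdiff_iff
    proof (intro exI conjI allI)
      show "g y = ereal s" by fact
      fix z show "ereal (s + inner (z - y) u) \<le> g z"
      proof (cases "g z")
        case (real r)
        then have "inner z u - r \<le> c" using inE[of z r] by simp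
        with hc real show ?thesis by (simp add: inner_diff_left)
      next
        case PInf then show ?thesis by simp
      next
        case MInf
        then have "inner z u - (inner z u - c - 1) \<le> c" using inE[of z "inner z u - c - 1"] by simp
        then show ?thesis by simp
      qed
    qed
    then show "p \<in> GG g u" using ps gy by (simp add: GG_def)
  qed
  have sub2: "GG g u \<subseteq> F"
  proof
    fix p assume p: "p \<in> GG g u"
    obtain y s where ps: "p = (y, s)" by (cases p)
    with p have gy: "g y = ereal s" and us: "u \<in> subdiff g y" by (auto simp: GG_def)
    have "(x0, s0) \<in> GG g u" using sub1 p0 by blast
    then have gx0: "g x0 = ereal s0" by (simp add: GG_def)
    have c0: "inner x0 u - s0 = c" using inF[of x0 s0] p0 by simp
    have "\<forall>z. ereal (s + inner (z - y) u) \<le> g z" using us gy by (auto simp: subdiff_iff)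
    then have "ereal (s + inner (x0 - y) u) \<le> ereal s0" using gx0 by metis
    then have "c \<le> inner y u - s" using c0 by (simp add: inner_diff_left)
    moreover have "inner y u - s \<le> c" using inE[of y s] gy by simp
    ultimately show "p \<in> F" using inF ps gy by simp
  qed
  show ?thesis using sub1 sub2 p0 by blast
qed

lemma face_char:
  fixes g :: "'a::real_inner \<Rightarrow> ereal"
  shows "(exposed_face (epi g) F \<and> minimal_face Kvert (epi g) F) \<longleftrightarrow> (\<exists>u. F = GG g u \<and> F \<noteq> {})"
  using face_from_GG GG_from_face by blast


lemma ri_pick:
  fixes g :: "'a::euclidean_space \<Rightarrow> ereal"
  assumes "subdiff g x0 \<noteq> {}"
  shows "\<exists>u\<in>subdiff g x0. \<forall>x. u \<in> subdiff g x \<longrightarrow> subdiff g x0 \<subseteq> subdiff g x"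
proof -
  have "rel_interior (subdiff g x0) \<noteq> {}"
    using assms rel_interior_eq_empty[OF subdiff_convex] by blast
  then obtain u where u: "u \<in> rel_interior (subdiff g x0)" by blast
  then have "u \<in> subdiff g x0" using rel_interior_subset by blast
  then show ?thesis using subdiff_ri[OF u] by blast
qed

theorem theorem3p3:
  fixes f :: "'a::euclidean_space \<Rightarrow> ereal"
  assumes "proper_fun f" and "closed_fun f" and "convex_fun f"
  defines "FS \<equiv> {F. exposed_face (epi (fconj f)) F \<and> minimal_face Kvert (epi (fconj f)) F}"
      and "FF \<equiv> {F. exposed_face (epi f) F \<and> minimal_face Kvert (epi f) F}"
  shows "bij_betw (Psi f) FS FF
       \<and> (\<forall>F1\<in>FS. \<forall>F2\<in>FS. F1 \<subseteq> F2 \<longrightarrow> Psi f F2 \<subseteq> Psi f F1)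
       \<and> (\<forall>F\<in>FS. Psi_star f (Psi f F) = F)
       \<and> (\<forall>G\<in>FF. Psi_star f G \<in> FS \<and> Psi f (Psi_star f G) = G)"
proof -
  have L: "u \<in> subdiff f x \<longleftrightarrow> x \<in> subdiff (fconj f) u" for x u
    using subdiff_to_conj conj_to_subdiff assms(2,3) unfolding closed_fun_def convex_fun_def by blast
  have FS_eq: "FS = {F. \<exists>x. F = GG (fconj f) x \<and> F \<noteq> {}}"
    unfolding FS_def face_char ..
  have FF_eq: "FF = {F. \<exists>u. F = GG f u \<and> F \<noteq> {}}"
    unfolding FF_def face_char ..
  have Psi_eq: "Psi f F = (\<Inter>u\<in>{u. \<exists>r. (u, r) \<in> F \<and> fconj f u = ereal r}. GG f u)" for F
    unfolding Psi_def GG_def ..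
  have PsiS_eq: "Psi_star f F = (\<Inter>x\<in>{x. \<exists>r. (x, r) \<in> F \<and> f x = ereal r}. GG (fconj f) x)" for F
    unfolding Psi_star_def GG_def using L by auto
  have idx1: "{u. \<exists>r. (u, r) \<in> GG (fconj f) x0 \<and> fconj f u = ereal r} = subdiff f x0" for x0
    using L subdiff_fin unfolding GG_def by fastforce
  have idx2: "{x. \<exists>r. (x, r) \<in> GG f u0 \<and> f x = ereal r} = subdiff (fconj f) u0" for u0
    using L subdiff_fin unfolding GG_def by fastforce
  have P1: "\<exists>us. Psi f (GG (fconj f) x0) = GG f us \<and> GG f us \<noteq> {} \<and> Psi_star f (GG f us) = GG (fconj f) x0"
    if ne: "GG (fconj f) x0 \<noteq> {}" for x0
  proof -
    have "subdiff f x0 \<noteq> {}" using ne L by (auto simp: GG_def)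
    then obtain us where us: "us \<in> subdiff f x0"
      and usp: "\<And>x. us \<in> subdiff f x \<Longrightarrow> subdiff f x0 \<subseteq> subdiff f x"
      using ri_pick by blast
    have e1: "Psi f (GG (fconj f) x0) = GG f us"
      unfolding Psi_eq idx1 using us usp by (auto simp: GG_def)
    obtain a where a: "f x0 = ereal a" using us subdiff_fin by blast
    have ne2: "GG f us \<noteq> {}" using us a by (auto simp: GG_def)
    have e2: "Psi_star f (GG f us) = GG (fconj f) x0"
      unfolding PsiS_eq idx2
    proof (intro set_eqI iffI)
      fix p assume "p \<in> (\<Inter>x\<in>subdiff (fconj f) us. GG (fconj f) x)"
      moreover have "x0 \<in> subdiff (fconj f) us" using us L by blast
      ultimately show "p \<in> GG (fconj f) x0" by blast
    next
      fix p assume p: "p \<in> GG (fconj f) x0"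
      obtain u r where pu: "p = (u, r)" by (cases p)
      with p have fu: "fconj f u = ereal r" and "x0 \<in> subdiff (fconj f) u" by (auto simp: GG_def)
      then have uS: "u \<in> subdiff f x0" using L by blast
      show "p \<in> (\<Inter>x\<in>subdiff (fconj f) us. GG (fconj f) x)"
      proof
        fix x assume "x \<in> subdiff (fconj f) us"
        then have "us \<in> subdiff f x" using L by blast
        then have "u \<in> subdiff f x" using usp uS by blast
        then show "p \<in> GG (fconj f) x" using pu fu L by (auto simp: GG_def)
      qed
    qed
    show ?thesis using e1 e2 ne2 by blast
  qed
  have P2: "\<exists>xs. Psi_star f (GG f u0) = GG (fconj f) xs \<and> GG (fconj f) xs \<noteq> {} \<and> Psi f (GG (fconj f) xs) = GG f u0"
    if ne: "GG f u0 \<noteq> {}" for u0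
  proof -
    have "subdiff (fconj f) u0 \<noteq> {}" using ne L by (auto simp: GG_def)
    then obtain xs where xs: "xs \<in> subdiff (fconj f) u0"
      and xsp: "\<And>u. xs \<in> subdiff (fconj f) u \<Longrightarrow> subdiff (fconj f) u0 \<subseteq> subdiff (fconj f) u"
      using ri_pick by blast
    have e1: "Psi_star f (GG f u0) = GG (fconj f) xs"
      unfolding PsiS_eq idx2 using xs xsp by (auto simp: GG_def)
    obtain a where a: "fconj f u0 = ereal a" using xs subdiff_fin by blast
    have ne2: "GG (fconj f) xs \<noteq> {}" using xs a by (auto simp: GG_def)
    have e2: "Psi f (GG (fconj f) xs) = GG f u0"
      unfolding Psi_eq idx1
    proof (intro set_eqI iffI)
      fix p assume "p \<in> (\<Inter>u\<in>subdiff f xs. GG f u)"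
      moreover have "u0 \<in> subdiff f xs" using xs L by blast
      ultimately show "p \<in> GG f u0" by blast
    next
      fix p assume p: "p \<in> GG f u0"
      obtain x r where px: "p = (x, r)" by (cases p)
      with p have fx: "f x = ereal r" and "u0 \<in> subdiff f x" by (auto simp: GG_def)
      then have xS: "x \<in> subdiff (fconj f) u0" using L by blast
      show "p \<in> (\<Inter>u\<in>subdiff f xs. GG f u)"
      proof
        fix u assume "u \<in> subdiff f xs"
        then have "xs \<in> subdiff (fconj f) u" using L by blast
        then have "x \<in> subdiff (fconj f) u" using xsp xS by blast
        then show "p \<in> GG f u" using px fx L by (auto simp: GG_def)
      qed
    qed
    show ?thesis using e1 e2 ne2 by blast
  qed
  have part3: "\<forall>F\<in>FS. Psi_star f (Psi f F) = F"
    using P1 unfolding FS_eq by fastforce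
  have part4: "\<forall>G\<in>FF. Psi_star f G \<in> FS \<and> Psi f (Psi_star f G) = G"
  proof
    fix G assume "G \<in> FF"
    then obtain u0 where G: "G = GG f u0" "GG f u0 \<noteq> {}" unfolding FF_eq by blast
    from P2[OF G(2)] obtain xs where "Psi_star f (GG f u0) = GG (fconj f) xs" "GG (fconj f) xs \<noteq> {}"
      "Psi f (GG (fconj f) xs) = GG f u0" by blast
    then show "Psi_star f G \<in> FS \<and> Psi f (Psi_star f G) = G" unfolding FS_eq G by auto
  qed
  have into: "Psi f ` FS \<subseteq> FF"
  proof
    fix G assume "G \<in> Psi f ` FS"
    then obtain F where F: "F \<in> FS" "G = Psi f F" by blast
    then obtain x0 where "F = GG (fconj f) x0" "GG (fconj f) x0 \<noteq> {}" unfolding FS_eq by blast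
    with P1 F show "G \<in> FF" unfolding FF_eq by blast
  qed
  have bij: "bij_betw (Psi f) FS FF"
    unfolding bij_betw_def
  proof
    show "inj_on (Psi f) FS"
      by (rule inj_on_inverseI[of _ "Psi_star f"]) (use part3 in blast)
    show "Psi f ` FS = FF"
    proof
      show "Psi f ` FS \<subseteq> FF" by (rule into)
      show "FF \<subseteq> Psi f ` FS" using part4 by (metis image_eqI subsetI)
    qed
  qed
  have part2: "\<forall>F1\<in>FS. \<forall>F2\<in>FS. F1 \<subseteq> F2 \<longrightarrow> Psi f F2 \<subseteq> Psi f F1"
    unfolding Psi_def by blast
  show ?thesis using bij part2 part3 part4 by blast
qed

end
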